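(* Fix integers $q\ge2$, $\ell\ge1$, $L\ge\ell$, a real $r\in[0,1-\frac{\ell}{L+1})$ and $\varepsilon>0$. There is a function $\delta:\mathbb{N}\to\mathbb{R}$ with $\delta(n)\to0$ as $n\to\infty$ such that, for every $n$ with $rn\in\mathbb{N}$, if there exists an $(r,\ell,L)$ list-recoverable code $C\subseteq[q]^n$ of rate at least $1-r-\varepsilon$ (i.e. $|C|\ge q^{(1-r-\varepsilon)n}$), then $L\ge\frac{\ell r}{\varepsilon}+\ell-1+\delta(n)$.
   Context: $\binom{[q]}{\le\ell}$ is the family of subsets of $[q]=\{1,\dots,q\}$ of size at most $\ell$. The rate of $C\subseteq[q]^n$ is $\log_q(|C|)/n$. $C$ is $(r,\ell,L)$ list-recoverable if for all $S_1,\dots,S_n\in\binom{[q]}{\le\ell}$, at most $L$ codewords $c\in C$ have $c_i\notin S_i$ for at most $rn$ coordinates $i$. *)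

theory Defs
  imports Complex_Main
begin

definition words :: "nat \<Rightarrow> nat \<Rightarrow> nat list set" where
  "words q n = {c. length c = n \<and> set c \<subseteq> {1..q}}"

definition list_recoverable ::
  "nat \<Rightarrow> nat \<Rightarrow> real \<Rightarrow> nat \<Rightarrow> nat \<Rightarrow> nat list set \<Rightarrow> bool" where
  "list_recoverable q n r l L C \<longleftrightarrow>
     C \<subseteq> words q n \<and>
     (\<forall>S :: nat \<Rightarrow> nat set. (\<forall>i<n. S i \<subseteq> {1..q} \<and> card (S i) \<le> l) \<longrightarrow>
        card {c \<in> C. real (card {i. i < n \<and> c ! i \<notin> S i}) \<le> r * real n} \<le> L)"

end

theory Submission
  imports Defs
begin

lemma pigeon:
  assumes "finite B" "f ` A \<subseteq> B" "L * card B < card A"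
  shows "\<exists>y\<in>B. L < card {x\<in>A. f x = y}"
proof (rule ccontr)
  assume "\<not> ?thesis"
  hence le: "\<forall>y\<in>B. card {x\<in>A. f x = y} \<le> L" by auto
  have "A = (\<Union>y\<in>B. {x\<in>A. f x = y})" using assms(2) by auto
  hence "card A \<le> (\<Sum>y\<in>B. card {x\<in>A. f x = y})" using card_UN_le[OF assms(1)] by metis
  also have "\<dots> \<le> card B * L" using sum_bounded_above[of B "\<lambda>y. card {x\<in>A. f x = y}" L] le by simp
  finally show False using assms(3) by (simp add: mult.commute)
qed

lemma residue_count:
  assumes "j < (d::nat)" shows "N div d \<le> card {u. u < N \<and> u mod d = j}"
proof -
  have "inj_on (\<lambda>a. a*d+j) {..<N div d}" using assms by (auto simp: inj_on_def)
  moreover have "(\<lambda>a. a*d+j) ` {..<N div d} \<subseteq> {u. u < N \<and> u mod d = j}"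
  proof
    fix u assume "u \<in> (\<lambda>a. a*d+j) ` {..<N div d}"
    then obtain a where a: "a < N div d" "u = a*d+j" by auto
    have "a*d + j < (a+1)*d" using assms by simp
    also have "(a+1)*d \<le> (N div d)*d" using a by (intro mult_right_mono) auto
    also have "\<dots> \<le> N" by simp
    finally show "u \<in> {u. u < N \<and> u mod d = j}" using a assms by auto
  qed
  ultimately show ?thesis using card_inj_on_le[of _ _ "{u. u < N \<and> u mod d = j}"] by fastforce
qed

lemma covered_count:
  assumes "l \<le> d" "j < d" "0 < (l::nat)"
  shows "l*m div d \<le> card {t. t < m \<and> (\<exists>s<l. (t*l+s) mod d = j)}"
proof -
  have "l*m div d \<le> card {u. u < l*m \<and> u mod d = j}" by (rule residue_count[OF assms(2)])
  also have "\<dots> \<le> card {t. t < m \<and> (\<exists>s<l. (t*l+s) mod d = j)}"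
  proof (rule card_inj_on_le[where f="\<lambda>u. u div l"])
    show "inj_on (\<lambda>u. u div l) {u. u < l*m \<and> u mod d = j}"
    proof (rule inj_onI)
      fix u v assume u: "u \<in> {u. u < l * m \<and> u mod d = j}" and v: "v \<in> {u. u < l * m \<and> u mod d = j}"
        and e: "u div l = v div l"
      have m: "u mod d = v mod d" using u v by simp
      have du: "u = (u div l)*l + u mod l" and dv: "v = (v div l)*l + v mod l" by simp_all
      have mu: "u mod l < l" and mv: "v mod l < l" using assms(3) by simp_all
      have dv': "v = (u div l)*l + v mod l" using dv e by simp
      have b1: "u < v + l" using du dv' mu mv by linarith
      have b2: "v < u + l" using du dv' mu mv by linarith
      show "u = v"
      proof (rule ccontr)
        assume ne: "u \<noteq> v"
        show False
        proof (cases "u < v")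
          case True
          have "d dvd v - u" using m True mod_eq_dvd_iff_nat[of u v d] by simp
          moreover have "0 < v - u" using True by simp
          ultimately have "d \<le> v - u" by (simp add: dvd_imp_le)
          thus False using b2 assms(1) True by linarith
        next
          case False
          hence lt: "v < u" using ne by simp
          have "d dvd u - v" using m lt mod_eq_dvd_iff_nat[of v u d] by simp
          moreover have "0 < u - v" using lt by simp
          ultimately have "d \<le> u - v" by (simp add: dvd_imp_le)
          thus False using b1 assms(1) lt by linarith
        qed
      qed
    qed
    show "(\<lambda>u. u div l) ` {u. u < l*m \<and> u mod d = j} \<subseteq> {t. t < m \<and> (\<exists>s<l. (t*l+s) mod d = j)}"
    proof
      fix t assume "t \<in> (\<lambda>u. u div l) ` {u. u < l*m \<and> u mod d = j}"
      then obtain u where u: "u < l*m" "u mod d = j" "t = u div l" by auto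
      have "t < m" using u assms(3) by (simp add: less_mult_imp_div_less mult.commute)
      moreover have "t*l + u mod l = u" using u by simp
      moreover have "u mod l < l" using assms(3) by simp
      ultimately have "t < m" "(t*l + u mod l) mod d = j" "u mod l < l" using u by simp_all
      thus "t \<in> {t. t < m \<and> (\<exists>s<l. (t*l+s) mod d = j)}" by blast
    qed
    show "finite {t. t < m \<and> (\<exists>s<l. (t*l+s) mod d = j)}" by simp
  qed
  finally show ?thesis .
qed



lemma words_finite: "finite (words q k)"
proof -
  have "words q k = {xs. set xs \<subseteq> {1..q} \<and> length xs = k}" unfolding words_def by auto
  thus ?thesis using finite_lists_length_eq[of "{1..q}" k] by simp
qed

lemma words_card: "card (words q k) = q ^ k"
proof -
  have "words q k = {xs. set xs \<subseteq> {1..q} \<and> length xs = k}" unfolding words_def by auto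
  thus ?thesis using card_lists_length_eq[of "{1..q}" k] by simp
qed

lemma main:
  fixes q l L n m :: nat and r \<epsilon> :: real
  assumes q: "q \<ge> 2" and l: "l \<ge> 1" "l \<le> L"
    and LR: "list_recoverable q n r l L C"
    and big: "real (card C) \<ge> real q powr ((1 - r - \<epsilon>) * real n)"
    and mn: "m \<le> n" and mb: "real L + (r+\<epsilon>)*real n \<le> real m"
    and cov: "real m - real (l*m div (L+1)) \<le> r * real n"
  shows False
proof -
  define k where "k = n - m"
  have Cw: "C \<subseteq> words q n" using LR unfolding list_recoverable_def by auto
  have finC: "finite C" using Cw words_finite finite_subset by blast
  have "real (L * q^k) < real (card C)"
  proof -
    have "L < 2 ^ L" by (rule less_exp)
    also have "(2::nat) ^ L \<le> q ^ L" using q by (simp add: power_mono)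
    finally have "real L < real q ^ L" by (metis of_nat_less_iff of_nat_power)
    hence "real (L*q^k) < real q ^ L * real q ^ k" using q by simp
    also have "\<dots> = real q ^ (k + L)" by (simp add: power_add mult.commute)
    also have "\<dots> = real q powr (real (k + L))" using q
      by (subst powr_realpow) auto
    also have "\<dots> \<le> real q powr ((1-r-\<epsilon>)*real n)"
    proof (rule powr_mono)
      show "real (k + L) \<le> (1-r-\<epsilon>)*real n" using mb mn unfolding k_def
        by (simp add: of_nat_diff algebra_simps)
      show "1 \<le> real q" using q by simp
    qed
    finally show ?thesis using big by linarith
  qed
  hence lt: "L * card (words q k) < card C" using words_card
    by (metis of_nat_less_iff)
  have img: "take k ` C \<subseteq> words q k"
  proof
    fix x assume "x \<in> take k ` C"
    then obtain c where c: "c \<in> C" "x = take k c" by auto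
    have "length c = n" "set c \<subseteq> {1..q}" using c Cw unfolding words_def by auto
    moreover have "set (take k c) \<subseteq> set c" by (rule set_take_subset)
    ultimately show "x \<in> words q k" using c unfolding words_def k_def by auto
  qed
  obtain y where y: "y \<in> words q k" "L < card {c\<in>C. take k c = y}"
    using pigeon[OF words_finite img lt] by blast
  define F where "F = {c\<in>C. take k c = y}"
  have finF: "finite F" unfolding F_def using finC by simp
  obtain G where G: "G \<subseteq> F" "card G = L+1"
    using obtain_subset_with_card_n[of "L+1" F] y(2) unfolding F_def by force
  have finG: "finite G" using G finF finite_subset by blast
  obtain g where g: "bij_betw g {0..<L+1} G"
    using ex_bij_betw_nat_finite[OF finG] G(2) by metis
  have gF: "g j \<in> C \<and> take k (g j) = y" if "j < L+1" for j
  proof -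
    have "g j \<in> G" using g that unfolding bij_betw_def by auto
    thus ?thesis using G(1) unfolding F_def by auto
  qed
  have glen: "length (g j) = n \<and> set (g j) \<subseteq> {1..q}" if "j < L+1" for j
    using gF[OF that] Cw unfolding words_def by auto
  define J where "J t = {j. j < L+1 \<and> (\<exists>s<l. (t*l+s) mod (L+1) = j)}" for t
  define S where "S i = (\<lambda>j. g j ! i) ` (if i < k then {0} else J (i-k))" for i
  have JL: "J t \<subseteq> {..<L+1}" for t unfolding J_def by auto
  have Jc: "card (J t) \<le> l" for t
  proof -
    have "J t = (\<lambda>s. (t*l+s) mod (L+1)) ` {..<l}" unfolding J_def by auto
    thus ?thesis using card_image_le[of "{..<l}" "\<lambda>s. (t*l+s) mod (L+1)"] by simp
  qed
  have Sok: "\<forall>i<n. S i \<subseteq> {1..q} \<and> card (S i) \<le> l"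
  proof (intro allI impI conjI)
    fix i assume i: "i < n"
    show "S i \<subseteq> {1..q}"
    proof
      fix x assume "x \<in> S i"
      then obtain j where j: "j < L+1" "x = g j ! i"
        unfolding S_def using JL by (auto split: if_splits)
      have "x \<in> set (g j)" using j glen[OF j(1)] i by auto
      thus "x \<in> {1..q}" using glen[OF j(1)] by auto
    qed
    show "card (S i) \<le> l"
    proof (cases "i < k")
      case True
      thus ?thesis unfolding S_def using l by simp
    next
      case False
      hence "card (S i) \<le> card (J (i-k))" unfolding S_def
        using card_image_le[of "J (i-k)" "\<lambda>j. g j ! i"] JL finite_subset by (simp add: finite_subset[OF JL])
      thus ?thesis using Jc order_trans by blast
    qed
  qed
  have good: "real (card {i. i < n \<and> g j ! i \<notin> S i}) \<le> r * real n" if j: "j < L+1" for j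
  proof -
    define T where "T = {t. t < m \<and> (\<exists>s<l. (t*l+s) mod (L+1) = j)}"
    have sub: "{i. i < n \<and> g j ! i \<notin> S i} \<subseteq> (\<lambda>t. t + k) ` ({..<m} - T)"
    proof
      fix i assume i: "i \<in> {i. i < n \<and> g j ! i \<notin> S i}"
      have nk: "\<not> i < k"
      proof
        assume ik: "i < k"
        have "g j ! i = take k (g j) ! i" using ik by simp
        also have "\<dots> = take k (g 0) ! i" using gF[OF j] gF[of 0] by simp
        also have "\<dots> = g 0 ! i" using ik by simp
        finally have "g j ! i \<in> S i" unfolding S_def using ik by simp
        thus False using i by simp
      qed
      have "i - k < m" using i nk unfolding k_def by auto
      moreover have "i - k \<notin> T"
      proof
        assume "i - k \<in> T"
        hence "j \<in> J (i-k)" unfolding T_def J_def using j by auto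
        hence "g j ! i \<in> S i" unfolding S_def using nk by simp
        thus False using i by simp
      qed
      ultimately show "i \<in> (\<lambda>t. t + k) ` ({..<m} - T)" using nk
        by (intro image_eqI[of _ _ "i - k"]) auto
    qed
    have TS: "T \<subseteq> {..<m}" unfolding T_def by auto
    have "card {i. i < n \<and> g j ! i \<notin> S i} \<le> card ((\<lambda>t. t + k) ` ({..<m} - T))"
      by (rule card_mono[OF _ sub]) simp
    also have "\<dots> \<le> card ({..<m} - T)" by (rule card_image_le) simp
    also have "\<dots> = m - card T" using TS by (simp add: card_Diff_subset finite_subset)
    finally have c1: "card {i. i < n \<and> g j ! i \<notin> S i} \<le> m - card T" .
    have c2: "l*m div (L+1) \<le> card T" unfolding T_def
      by (rule covered_count) (use l j in auto)
    have c3: "card T \<le> m" using TS card_mono[of "{..<m}" T] by simp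
    have "real (card {i. i < n \<and> g j ! i \<notin> S i}) \<le> real m - real (l*m div (L+1))"
      using c1 c2 c3 by linarith
    thus ?thesis using cov by linarith
  qed
  have "g ` {0..<L+1} \<subseteq> {c \<in> C. real (card {i. i < n \<and> c ! i \<notin> S i}) \<le> r * real n}"
    using gF good by auto
  hence "card (g ` {0..<L+1}) \<le> card {c \<in> C. real (card {i. i < n \<and> c ! i \<notin> S i}) \<le> r * real n}"
    by (rule card_mono[rotated]) (simp add: finC)
  moreover have "card (g ` {0..<L+1}) = L + 1"
    using g G(2) unfolding bij_betw_def by (simp add: card_image)
  moreover have "card {c \<in> C. real (card {i. i < n \<and> c ! i \<notin> S i}) \<le> r * real n} \<le> L"
    using LR Sok unfolding list_recoverable_def by blast
  ultimately show False by simp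
qed


lemma div_lower: "real (x div d) \<ge> real x / real d - 1" if "d > 0" for x d :: nat
proof -
  have "x = d * (x div d) + x mod d" by simp
  hence "real x = real d * real (x div d) + real (x mod d)" by (metis of_nat_add of_nat_mult)
  moreover have "real (x mod d) < real d" using that by simp
  ultimately have "real x < real d * (real (x div d) + 1)" by (simp add: algebra_simps)
  thus ?thesis using that by (simp add: divide_simps algebra_simps)
qed

theorem corollary5p2:
  fixes q l L :: nat and r \<epsilon> :: real
  assumes "q \<ge> 2" and "l \<ge> 1" and "L \<ge> l"
    and "0 \<le> r" and "r < 1 - real l / (real L + 1)" and "\<epsilon> > 0"
  shows "\<exists>\<delta> :: nat \<Rightarrow> real. \<delta> \<longlonglongrightarrow> 0 \<and>
    (\<forall>n. r * real n \<in> \<nat> \<longrightarrow>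
      (\<exists>C. list_recoverable q n r l L C \<and>
            real (card C) \<ge> real q powr ((1 - r - \<epsilon>) * real n)) \<longrightarrow>
      real L \<ge> real l * r / \<epsilon> + real l - 1 + \<delta> n)"
proof (cases "real l * r / \<epsilon> + real l - 1 \<le> real L")
  case True
  thus ?thesis by (intro exI[of _ "\<lambda>_. 0"]) simp
next
  case False
  define D where "D = real L + 1 - real l"
  have Dpos: "D > 0" unfolding D_def using assms(3) by simp
  have gap: "D * \<epsilon> < real l * r"
  proof -
    have "D < real l * r / \<epsilon>" using False unfolding D_def by simp
    thus ?thesis using assms(6) by (simp add: field_simps)
  qed
  define a where "a = (real L + 1) / D"
  have apos: "a > 0" unfolding a_def using Dpos by simp
  have ra: "r * a - r = r * real l / D" unfolding a_def D_def using Dpos unfolding D_def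
    by (simp add: field_simps)
  have eps_lt: "\<epsilon> < r * real l / D" using gap Dpos by (simp add: field_simps)
  define \<gamma> where "\<gamma> = r * a - r - \<epsilon>"
  have gpos: "\<gamma> > 0" unfolding \<gamma>_def using ra eps_lt by simp
  have rle: "r * a \<le> 1"
  proof -
    have "r * (real L + 1) < D" using assms(5) unfolding D_def
      by (simp add: field_simps)
    thus ?thesis unfolding a_def using Dpos by (simp add: field_simps)
  qed
  define N0 where "N0 = nat \<lceil>(real L + a + 1) / \<gamma>\<rceil>"
  define \<delta> where "\<delta> n = (if n < N0 then real L - (real l * r / \<epsilon> + real l - 1) else 0)" for n :: nat
  show ?thesis
  proof (intro exI conjI allI impI)
    have "\<forall>n\<ge>N0. \<delta> n = 0" unfolding \<delta>_def by simp
    hence "eventually (\<lambda>n. \<delta> n = 0) sequentially" unfolding eventually_sequentially by blast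
    thus "\<delta> \<longlonglongrightarrow> 0" by (rule tendsto_eventually)
  next
    fix n :: nat
    assume ex: "\<exists>C. list_recoverable q n r l L C \<and> real (card C) \<ge> real q powr ((1 - r - \<epsilon>) * real n)"
    show "real L \<ge> real l * r / \<epsilon> + real l - 1 + \<delta> n"
    proof (cases "n < N0")
      case True
      thus ?thesis unfolding \<delta>_def by simp
    next
      case nN: False
      obtain C where C: "list_recoverable q n r l L C" "real (card C) \<ge> real q powr ((1 - r - \<epsilon>) * real n)"
        using ex by blast
      have "real n \<ge> (real L + a + 1) / \<gamma>" using nN unfolding N0_def by linarith
      hence gn: "\<gamma> * real n \<ge> real L + a + 1" using gpos by (simp add: field_simps)
      define x where "x = (r * real n - 1) * a"
      have xe: "x = r * a * real n - a" unfolding x_def by (simp add: algebra_simps)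
      have xbig: "x - 1 \<ge> real L + (r + \<epsilon>) * real n" using gn unfolding xe \<gamma>_def by (simp add: algebra_simps)
      have x0: "x \<ge> 0" using xbig assms(4) assms(6) by (smt (verit) of_nat_0_le_iff mult_nonneg_nonneg)
      define m where "m = nat \<lfloor>x\<rfloor>"
      have mx: "real m \<le> x" "real m > x - 1" unfolding m_def using x0 by linarith+
      have xn: "x \<le> real n"
      proof -
        have "x \<le> r * a * real n" unfolding xe using apos by simp
        also have "\<dots> \<le> real n" using rle mult_right_mono[OF rle, of "real n"] by simp
        finally show ?thesis .
      qed
      have mn: "m \<le> n" using mx xn by linarith
      have mb: "real L + (r+\<epsilon>)*real n \<le> real m" using mx xbig by linarith
      have cov: "real m - real (l*m div (L+1)) \<le> r * real n"
      proof -
        have "real (l*m div (L+1)) \<ge> real (l*m) / real (L+1) - 1" by (rule div_lower) simp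
        hence "real m - real (l*m div (L+1)) \<le> real m - real l * real m / (real L + 1) + 1" by (simp add: add.commute)
        also have "real m - real l * real m / (real L + 1) = real m / a"
          unfolding a_def D_def by (simp add: field_simps)
        also have "real m / a \<le> x / a" using mx apos by (simp add: divide_right_mono)
        also have "x / a = r * real n - 1" unfolding x_def using apos by simp
        finally show ?thesis by simp
      qed
      show ?thesis using main[OF assms(1) assms(2) assms(3) C(1) C(2) mn mb cov] by simp
    qed
  qed
qed

end
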